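(* Let $M=\begin{pmatrix} a&b\\ 0&d\end{pmatrix}$ with $a,d$ having generalized core-EP inverses. If $a^{\pi}b=0$, then $M$ has a generalized core-EP inverse in $M_2(\mathcal{A})$ and $M^{\mathrm{gcEP}}=\begin{pmatrix} a^{\mathrm{gcEP}}&-a^{\mathrm{gcEP}}bd^{\mathrm{gcEP}}\\ 0&d^{\mathrm{gcEP}}\end{pmatrix}$.
   Context: $\mathcal{A}$ is a Banach algebra (a complex Banach *-algebra with identity, as in the whole paper), $M_2(\mathcal{A})$ the $2\times2$ matrices over $\mathcal{A}$. The generalized core-EP inverse of $a$ is the unique $x$ with $ax^2=x$, $(ax)^*=ax$, $\lim_{n\to\infty}\|a^n-xa^{n+1}\|^{1/n}=0$, denoted $a^{\mathrm{gcEP}}$. $a^{\pi}=1-aa^d$, with $a^d$ the generalized Drazin inverse. *)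

theory Defs
  imports "HOL-Analysis.Analysis"
begin

text \<open>The complex scalar structure is
  not modelled: we work over real scalars, a complex Banach *-algebra being in
  particular a real one (the involution is conjugate-linear, hence real-linear).\<close>
class banach_star_algebra = real_normed_algebra_1 + banach +
  fixes invol :: "'a \<Rightarrow> 'a"
  assumes invol_add: "invol (x + y) = invol x + invol y"
    and invol_mult: "invol (x * y) = invol y * invol x"
    and invol_invol: "invol (invol x) = x"
    and invol_scaleR: "invol (scaleR r x) = scaleR r (invol x)"

definition quasinil :: "'a::banach_star_algebra \<Rightarrow> bool" where
  "quasinil q \<longleftrightarrow> (\<lambda>n. root n (norm (q ^ n))) \<longlonglongrightarrow> 0"

definition is_gDrazin :: "'a::banach_star_algebra \<Rightarrow> 'a \<Rightarrow> bool" where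
  "is_gDrazin a x \<longleftrightarrow> x * a * x = x \<and> a * x = x * a \<and> quasinil (a - a * a * x)"

definition gDrazin :: "'a::banach_star_algebra \<Rightarrow> 'a" where
  "gDrazin a = (THE x. is_gDrazin a x)"

definition api :: "'a::banach_star_algebra \<Rightarrow> 'a" where
  "api a = 1 - a * gDrazin a"

definition is_gcEP :: "'a::banach_star_algebra \<Rightarrow> 'a \<Rightarrow> bool" where
  "is_gcEP a x \<longleftrightarrow> a * x ^ 2 = x \<and> invol (a * x) = a * x \<and>
     (\<lambda>n. root n (norm (a ^ n - x * a ^ (Suc n)))) \<longlonglongrightarrow> 0"

definition gcEP :: "'a::banach_star_algebra \<Rightarrow> 'a" where
  "gcEP a = (THE x. is_gcEP a x)"

text \<open>2x2 matrices over the algebra: Mat2 a b c d = [[a,b],[c,d]].\<close>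
datatype 'a mat2 = Mat2 'a 'a 'a 'a

fun m2mult :: "'a::banach_star_algebra mat2 \<Rightarrow> 'a mat2 \<Rightarrow> 'a mat2" where
  "m2mult (Mat2 a b c d) (Mat2 e f g h) =
     Mat2 (a * e + b * g) (a * f + b * h) (c * e + d * g) (c * f + d * h)"

fun m2minus :: "'a::banach_star_algebra mat2 \<Rightarrow> 'a mat2 \<Rightarrow> 'a mat2" where
  "m2minus (Mat2 a b c d) (Mat2 e f g h) = Mat2 (a - e) (b - f) (c - g) (d - h)"

fun m2invol :: "'a::banach_star_algebra mat2 \<Rightarrow> 'a mat2" where
  "m2invol (Mat2 a b c d) = Mat2 (invol a) (invol c) (invol b) (invol d)"

definition m2one :: "'a::banach_star_algebra mat2" where
  "m2one = Mat2 1 0 0 1"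

fun m2pow :: "'a::banach_star_algebra mat2 \<Rightarrow> nat \<Rightarrow> 'a mat2" where
  "m2pow M 0 = m2one"
| "m2pow M (Suc n) = m2mult M (m2pow M n)"

text \<open>A Banach algebra norm on M_2(A) (all such norms are equivalent, and the
  condition lim ||.||^(1/n) = 0 does not depend on the choice).\<close>
fun m2norm :: "'a::banach_star_algebra mat2 \<Rightarrow> real" where
  "m2norm (Mat2 a b c d) = norm a + norm b + norm c + norm d"

definition is_gcEP2 :: "'a::banach_star_algebra mat2 \<Rightarrow> 'a mat2 \<Rightarrow> bool" where
  "is_gcEP2 M X \<longleftrightarrow> m2mult M (m2mult X X) = X \<and> m2invol (m2mult M X) = m2mult M X \<and>
     (\<lambda>n. root n (m2norm (m2minus (m2pow M n) (m2mult X (m2pow M (Suc n)))))) \<longlonglongrightarrow> 0"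

definition gcEP2 :: "'a::banach_star_algebra mat2 \<Rightarrow> 'a mat2" where
  "gcEP2 M = (THE X. is_gcEP2 M X)"

end

theory Submission
  imports Defs
begin

definition small :: "(nat \<Rightarrow> real) \<Rightarrow> bool" where
  "small f \<longleftrightarrow> (\<lambda>n. root n (f n)) \<longlonglongrightarrow> 0"

lemma small_eps:
  assumes nn: "\<And>n. 0 \<le> f n"
  shows "small f \<longleftrightarrow> (\<forall>e>0. eventually (\<lambda>n. f n \<le> e ^ n) sequentially)"
proof
  assume s: "small f"
  show "\<forall>e>0. eventually (\<lambda>n. f n \<le> e ^ n) sequentially"
  proof (intro allI impI)
    fix e :: real assume e: "e > 0"
    have "eventually (\<lambda>n. root n (f n) < e) sequentially"
      using s e unfolding small_def by (rule order_tendstoD)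
    moreover have "eventually (\<lambda>n. n > 0) sequentially" by (rule eventually_gt_at_top)
    ultimately show "eventually (\<lambda>n. f n \<le> e ^ n) sequentially"
    proof eventually_elim
      case (elim n)
      have "f n = root n (f n) ^ n" using elim nn by simp
      also have "\<dots> \<le> e ^ n" using elim nn
        by (intro power_mono) (auto intro: real_root_ge_zero)
      finally show ?case .
    qed
  qed
next
  assume h: "\<forall>e>0. eventually (\<lambda>n. f n \<le> e ^ n) sequentially"
  show "small f" unfolding small_def
  proof (rule order_tendstoI)
    fix a :: real assume "a < 0"
    then show "eventually (\<lambda>n. a < root n (f n)) sequentially"
      by (intro always_eventually allI) (metis nn real_root_ge_zero less_le_trans)
  next
    fix a :: real assume a: "0 < a"
    have "eventually (\<lambda>n. f n \<le> (a/2) ^ n) sequentially" using h a by simp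
    moreover have "eventually (\<lambda>n. n > 0) sequentially" by (rule eventually_gt_at_top)
    ultimately show "eventually (\<lambda>n. root n (f n) < a) sequentially"
    proof eventually_elim
      case (elim n)
      have "root n (f n) \<le> root n ((a/2) ^ n)" using elim by (simp add: real_root_le_mono)
      also have "\<dots> = a/2" using elim a by (simp add: real_root_power_cancel)
      finally show ?case using a by simp
    qed
  qed
qed

lemma small_zero:
  assumes "0 \<le> C" "\<And>n. C \<le> f n" "small f"
  shows "C = 0"
proof (rule ccontr)
  assume "C \<noteq> 0"
  with assms(1) have C: "C > 0" by simp
  have nn: "\<And>n. 0 \<le> f n" using assms(1,2) order_trans by blast
  have "eventually (\<lambda>n. f n \<le> (1/2) ^ n) sequentially"
    using assms(3) nn by (simp add: small_eps)
  then have "eventually (\<lambda>n. C \<le> (1/2::real) ^ n) sequentially"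
    by eventually_elim (use assms(2) order_trans in blast)
  moreover have "(\<lambda>n. (1/2::real) ^ n) \<longlonglongrightarrow> 0"
    by (rule LIMSEQ_power_zero) simp
  ultimately have "C \<le> 0"
    by (intro tendsto_le[OF _ _ tendsto_const]) auto
  with C show False by simp
qed

lemma small_mono:
  assumes "\<And>n. 0 \<le> g n" "\<And>n. g n \<le> f n" "small f"
  shows "small g"
proof -
  have nn: "\<And>n. 0 \<le> f n" using assms(1,2) order_trans by blast
  show ?thesis
    using assms(3) unfolding small_eps[OF assms(1)] small_eps[OF nn]
    by (metis (mono_tags, lifting) assms(2) eventually_mono order_trans)
qed

lemma small_scale:
  assumes "0 \<le> K" "small f"
  shows "small (\<lambda>n. K * f n)"
proof (cases "K = 0")
  case True then show ?thesis by (simp add: small_def)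
next
  case False
  with assms have K: "K > 0" by simp
  have "(\<lambda>n. root n K * root n (f n)) \<longlonglongrightarrow> 1 * 0"
    using LIMSEQ_root_const[OF K] assms(2) unfolding small_def by (rule tendsto_mult)
  then show ?thesis unfolding small_def by (simp add: real_root_mult)
qed

lemma small_geom:
  assumes "0 \<le> K" "small f"
  shows "small (\<lambda>n. f n * K ^ n)"
proof -
  have "(\<lambda>n. root n (f n) * K) \<longlonglongrightarrow> 0 * K"
    using assms(2) unfolding small_def by (intro tendsto_mult tendsto_const)
  moreover have "eventually (\<lambda>n. root n (f n) * K = root n (f n * K ^ n)) sequentially"
    using eventually_gt_at_top[of 0]
    by eventually_elim (use assms(1) in \<open>simp add: real_root_mult real_root_power_cancel\<close>)
  ultimately show ?thesis unfolding small_def by (simp add: tendsto_cong)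
qed

lemma small_add:
  assumes nf: "\<And>n. 0 \<le> f n" and ng: "\<And>n. 0 \<le> g n" and "small f" "small g"
  shows "small (\<lambda>n. f n + g n)"
proof -
  have "(\<lambda>n. max (root n (f n)) (root n (g n))) \<longlonglongrightarrow> max 0 0"
    using assms(3,4) unfolding small_def by (rule tendsto_max)
  moreover have "eventually (\<lambda>n. max (root n (f n)) (root n (g n)) = root n (max (f n) (g n))) sequentially"
    using eventually_gt_at_top[of 0]
    by eventually_elim (auto simp: max_def)
  ultimately have "small (\<lambda>n. max (f n) (g n))" unfolding small_def by (simp add: tendsto_cong)
  then have m: "small (\<lambda>n. 2 * max (f n) (g n))" by (rule small_scale[rotated]) simp
  show ?thesis
    by (rule small_mono[OF _ _ m]) (auto simp: nf ng add_nonneg_nonneg)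
qed

lemma small_Suc_iff:
  assumes nn: "\<And>n. 0 \<le> f n"
  shows "small (\<lambda>n. f (Suc n)) \<longleftrightarrow> small f"
proof
  assume s: "small (\<lambda>n. f (Suc n))"
  show "small f" unfolding small_eps[OF nn]
  proof (intro allI impI)
    fix e :: real assume e: "e > 0"
    define d where "d = min e (1/2)"
    have d: "0 < d" "d \<le> e" "d < 1" using e by (auto simp: d_def)
    have "eventually (\<lambda>n. f (Suc n) \<le> (d*d) ^ n) sequentially"
      using s d unfolding small_eps[of "\<lambda>n. f (Suc n)", OF nn] by simp
    moreover have "eventually (\<lambda>n. n > 0) sequentially" by (rule eventually_gt_at_top)
    ultimately have "eventually (\<lambda>n. f (Suc n) \<le> e ^ Suc n) sequentially"
    proof eventually_elim
      case (elim n)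
      have "(d*d)^n = d^n * d^n" by (simp add: power_mult_distrib)
      also have "\<dots> \<le> d^n * d" using d elim
        by (intro mult_left_mono) (auto intro: power_le_one power_decreasing[of 1 n d, simplified])
      also have "\<dots> = d ^ Suc n" by (simp add: mult.commute)
      also have "\<dots> \<le> e ^ Suc n" using d by (intro power_mono) auto
      finally show ?case using elim by simp
    qed
    then show "eventually (\<lambda>n. f n \<le> e ^ n) sequentially"
      by (simp only: eventually_sequentially_Suc[of "\<lambda>n. f n \<le> e ^ n"])
  qed
next
  assume s: "small f"
  show "small (\<lambda>n. f (Suc n))" unfolding small_eps[of "\<lambda>n. f (Suc n)", OF nn]
  proof (intro allI impI)
    fix e :: real assume e: "e > 0"
    define d where "d = min e (1/2)"
    have d: "0 < d" "d \<le> e" "d < 1" using e by (auto simp: d_def)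
    have "eventually (\<lambda>n. f n \<le> d ^ n) sequentially"
      using s d unfolding small_eps[OF nn] by simp
    then have "eventually (\<lambda>n. f (Suc n) \<le> d ^ Suc n) sequentially"
      by (simp only: eventually_sequentially_Suc[of "\<lambda>n. f n \<le> d ^ n"])
    then show "eventually (\<lambda>n. f (Suc n) \<le> e ^ n) sequentially"
    proof eventually_elim
      case (elim n)
      have "d ^ Suc n \<le> d ^ n" using d by (intro power_decreasing) auto
      also have "\<dots> \<le> e ^ n" using d by (intro power_mono) auto
      finally show ?case using elim by simp
    qed
  qed
qed

lemma pow_commute_mult:
  fixes a z :: "'a::monoid_mult"
  assumes "a * z = z * a"
  shows "(a * z) ^ n = a ^ n * z ^ n"
proof (induct n)
  case 0 then show ?case by simp
next
  case (Suc n)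
  have c: "z * a ^ n = a ^ n * z" using power_commuting_commutes[OF assms, of n] by simp
  have "(a * z) ^ Suc n = a * (z * a ^ n) * z ^ n" by (simp add: Suc mult.assoc)
  also have "\<dots> = a ^ Suc n * z ^ Suc n" by (simp add: c mult.assoc)
  finally show ?case .
qed

locale nsr =
  fixes inv :: "'a::ring_1 \<Rightarrow> 'a" and N :: "'a \<Rightarrow> real"
  assumes inv_mult: "inv (x * y) = inv y * inv x"
    and N_ge: "0 \<le> N x" and N_eq0: "N x = 0 \<Longrightarrow> x = 0"
    and N_add: "N (x + y) \<le> N x + N y" and N_mult: "N (x * y) \<le> N x * N y"
    and N_uminus: "N (- x) = N x"
begin

definition gc :: "'a \<Rightarrow> 'a \<Rightarrow> bool" where
  "gc M X \<longleftrightarrow> M * (X * X) = X \<and> inv (M * X) = M * X \<and>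
     small (\<lambda>n. N (M ^ n - X * M ^ (Suc n)))"

definition gd :: "'a \<Rightarrow> 'a \<Rightarrow> bool" where
  "gd a z \<longleftrightarrow> z * a * z = z \<and> a * z = z * a \<and> small (\<lambda>n. N ((a - a * a * z) ^ n))"

lemma N_pow: "N (x ^ Suc n) \<le> N x ^ Suc n"
proof (induct n)
  case 0 then show ?case by simp
next
  case (Suc n)
  have "N (x ^ Suc (Suc n)) \<le> N x * N (x ^ Suc n)" by (metis N_mult power_Suc)
  also have "\<dots> \<le> N x * N x ^ Suc n" by (intro mult_left_mono Suc N_ge)
  finally show ?case by simp
qed

lemma N_diff: "N (x - y) \<le> N x + N y"
  using N_add[of x "- y"] by (simp add: N_uminus)

lemma N_commute: "N (x - y) = N (y - x)"
  using N_uminus[of "x - y"] by simp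

lemma zero_crit:
  assumes "small e" "\<And>n. 0 \<le> e n" "0 \<le> K" "0 \<le> L" "\<And>n. N z \<le> K * e n * L ^ n"
  shows "z = 0"
proof -
  have "small (\<lambda>n. K * e n * L ^ n)" using assms by (intro small_geom small_scale) auto
  then have "N z = 0" using assms(5) N_ge by (intro small_zero) auto
  then show ?thesis by (rule N_eq0)
qed

context
  fixes M X assumes g: "gc M X"
begin

lemma gc_sq: "M * (X * X) = X" using g by (simp add: gc_def)
lemma gc_inv: "inv (M * X) = M * X" using g by (simp add: gc_def)
lemma gc_small: "small (\<lambda>n. N (M ^ n - X * M ^ (Suc n)))" using g by (simp add: gc_def)

lemma gc_pow: "X = M ^ n * X ^ Suc n"
proof (induct n)
  case 0 then show ?case by simp
next
  case (Suc n)
  have "M ^ Suc n * X ^ Suc (Suc n) = M ^ n * (M * (X * X)) * X ^ n"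
    by (simp only: power_Suc2[of M n] power_Suc[of X "Suc n"] power_Suc[of X n] mult.assoc)
  also have "\<dots> = M ^ n * X ^ Suc n" by (simp add: gc_sq mult.assoc)
  finally show ?case using Suc by simp
qed

lemma gc_XMX: "X * M * X = X"
proof -
  have eq: "X * M * X - X = (X * M ^ Suc n - M ^ n) * X ^ Suc n" for n
  proof -
    have "(X * M ^ Suc n - M ^ n) * X ^ Suc n = X * M * (M ^ n * X ^ Suc n) - M ^ n * X ^ Suc n"
      by (simp add: algebra_simps)
    also have "\<dots> = X * M * X - X" by (simp only: gc_pow[of n, symmetric])
    finally show ?thesis by simp
  qed
  have "X * M * X - X = 0"
  proof (rule zero_crit[OF gc_small N_ge _ N_ge])
    fix n
    have "N (X * M * X - X) \<le> N (X * M ^ Suc n - M ^ n) * N (X ^ Suc n)"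
      unfolding eq[of n] by (rule N_mult)
    also have "\<dots> \<le> N (M ^ n - X * M ^ Suc n) * N X ^ Suc n"
      by (rule mult_mono[OF order_eq_refl[OF N_commute] N_pow N_ge N_ge])
    also have "\<dots> = N X * N (M ^ n - X * M ^ Suc n) * N X ^ n" by simp
    finally show "N (X * M * X - X) \<le> N X * N (M ^ n - X * M ^ Suc n) * N X ^ n" .
  qed (rule N_ge)
  then show ?thesis by simp
qed

lemma gc_p_idem: "(M * X) * (M * X) = M * X"
  by (metis gc_XMX mult.assoc)

lemma gc_pX: "(M * X) * X = X" by (metis gc_sq mult.assoc)
lemma gc_Xp: "X * (M * X) = X" by (metis gc_XMX mult.assoc)

lemma gc_p_pow: "M * X = M ^ Suc n * X ^ Suc n"
  using gc_pow[of n] by (simp add: mult.assoc)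

lemma gc_tail: "(1 - M * X) * M ^ Suc n = M * (M ^ n - X * M ^ Suc n)"
  by (simp add: right_diff_distrib left_diff_distrib mult.assoc)

lemma gc_tail_small: "small (\<lambda>n. N ((1 - M * X) * M ^ Suc n))"
proof -
  have "small (\<lambda>n. N M * N (M ^ n - X * M ^ (Suc n)))"
    by (intro small_scale gc_small N_ge)
  moreover have "N ((1 - M * X) * M ^ Suc n) \<le> N M * N (M ^ n - X * M ^ (Suc n))" for n
    by (simp only: gc_tail) (rule N_mult)
  ultimately show ?thesis
    by (rule small_mono[OF N_ge, rotated])
qed

lemma gc_XMp: "X * M * (M * X) = M * X"
proof -
  have eq: "X * M * (M * X) - M * X = (X * M ^ Suc (Suc n) - M ^ Suc n) * X ^ Suc n" for n
  proof -
    have "(X * M ^ Suc (Suc n) - M ^ Suc n) * X ^ Suc n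
        = X * M * (M ^ Suc n * X ^ Suc n) - M ^ Suc n * X ^ Suc n"
      by (simp add: algebra_simps)
    then show ?thesis by (simp only: gc_p_pow[of n, symmetric])
  qed
  have s: "small (\<lambda>n. N (M ^ Suc n - X * M ^ Suc (Suc n)))"
    using gc_small by (subst small_Suc_iff) (auto intro: N_ge)
  have "X * M * (M * X) - M * X = 0"
  proof (rule zero_crit[OF s N_ge _ N_ge])
    fix n
    have "N (X * M * (M * X) - M * X) \<le> N (X * M ^ Suc (Suc n) - M ^ Suc n) * N (X ^ Suc n)"
      unfolding eq[of n] by (rule N_mult)
    also have "\<dots> \<le> N (M ^ Suc n - X * M ^ Suc (Suc n)) * N X ^ Suc n"
      by (rule mult_mono[OF order_eq_refl[OF N_commute] N_pow N_ge N_ge])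
    also have "\<dots> = N X * N (M ^ Suc n - X * M ^ Suc (Suc n)) * N X ^ n" by simp
    finally show "N (X * M * (M * X) - M * X) \<le> N X * N (M ^ Suc n - X * M ^ Suc (Suc n)) * N X ^ n" .
  qed (rule N_ge)
  then show ?thesis by simp
qed

lemma gc_low: "(1 - M * X) * M * (M * X) = 0"
proof -
  have eq: "(1 - M * X) * M * (M * X) = ((1 - M * X) * M ^ Suc n) * (M * X ^ Suc n)" for n
  proof -
    have c: "M * M ^ Suc n = M ^ Suc n * M" by (rule power_commutes[symmetric])
    have "(1 - M * X) * M * (M * X) = (1 - M * X) * M * (M ^ Suc n * X ^ Suc n)"
      by (simp only: gc_p_pow[of n, symmetric])
    also have "\<dots> = ((1 - M * X) * M ^ Suc n) * (M * X ^ Suc n)"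
      by (metis c mult.assoc)
    finally show ?thesis .
  qed
  show ?thesis
  proof (rule zero_crit[OF gc_tail_small N_ge _ N_ge])
    fix n
    have "N ((1 - M * X) * M * (M * X)) \<le> N ((1 - M * X) * M ^ Suc n) * N (M * X ^ Suc n)"
      unfolding eq[of n] by (rule N_mult)
    also have "\<dots> \<le> N ((1 - M * X) * M ^ Suc n) * (N M * N X ^ Suc n)"
      by (rule mult_left_mono[OF order_trans[OF N_mult mult_left_mono[OF N_pow N_ge]] N_ge])
    also have "\<dots> = (N M * N X) * N ((1 - M * X) * M ^ Suc n) * N X ^ n" by (simp add: algebra_simps)
    finally show "N ((1 - M * X) * M * (M * X)) \<le> (N M * N X) * N ((1 - M * X) * M ^ Suc n) * N X ^ n" .
  qed (intro mult_nonneg_nonneg N_ge)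
qed

end

lemma gc_qp:
  assumes gX: "gc M X" and gY: "gc M Y"
  shows "(M * Y) * (M * X) = M * X"
proof -
  have eq: "(M * Y) * (M * X) - M * X = - (((1 - M * Y) * M ^ Suc n) * X ^ Suc n)" for n
  proof -
    have "((1 - M * Y) * M ^ Suc n) * X ^ Suc n = (1 - M * Y) * (M ^ Suc n * X ^ Suc n)"
      by (simp only: mult.assoc)
    also have "\<dots> = (1 - M * Y) * (M * X)" by (simp only: gc_p_pow[OF gX, of n, symmetric])
    also have "\<dots> = M * X - (M * Y) * (M * X)" by (simp add: left_diff_distrib)
    finally show ?thesis by simp
  qed
  have "(M * Y) * (M * X) - M * X = 0"
  proof (rule zero_crit[OF gc_tail_small[OF gY] N_ge _ N_ge])
    fix n
    have "N ((M * Y) * (M * X) - M * X) \<le> N ((1 - M * Y) * M ^ Suc n) * N (X ^ Suc n)"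
      unfolding eq[of n] N_uminus by (rule N_mult)
    also have "\<dots> \<le> N ((1 - M * Y) * M ^ Suc n) * N X ^ Suc n"
      by (rule mult_left_mono[OF N_pow N_ge])
    also have "\<dots> = N X * N ((1 - M * Y) * M ^ Suc n) * N X ^ n" by simp
    finally show "N ((M * Y) * (M * X) - M * X) \<le> N X * N ((1 - M * Y) * M ^ Suc n) * N X ^ n" .
  qed (rule N_ge)
  then show ?thesis by simp
qed

lemma gc_unique:
  assumes gX: "gc M X" and gY: "gc M Y"
  shows "X = Y"
proof -
  have pq: "M * X = M * Y"
  proof -
    have "M * X = inv (M * X)" by (simp add: gc_inv[OF gX])
    also have "\<dots> = inv ((M * Y) * (M * X))" by (simp add: gc_qp[OF gX gY])
    also have "\<dots> = inv (M * X) * inv (M * Y)" by (rule inv_mult)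
    also have "\<dots> = (M * X) * (M * Y)" by (simp add: gc_inv[OF gX] gc_inv[OF gY])
    also have "\<dots> = M * Y" by (rule gc_qp[OF gY gX])
    finally show ?thesis .
  qed
  have eq: "X - Y = ((X * M ^ Suc n - M ^ n) - (Y * M ^ Suc n - M ^ n)) * X ^ Suc n" for n
  proof -
    have "((X * M ^ Suc n - M ^ n) - (Y * M ^ Suc n - M ^ n)) * X ^ Suc n
        = (X - Y) * (M ^ Suc n * X ^ Suc n)"
      by (simp only: mult.assoc left_diff_distrib diff_diff_eq2 add_diff_cancel_right) (simp add: algebra_simps)
    also have "\<dots> = (X - Y) * (M * X)" by (simp only: gc_p_pow[OF gX, of n, symmetric])
    also have "\<dots> = X * (M * X) - Y * (M * Y)" by (simp add: left_diff_distrib pq)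
    also have "\<dots> = X - Y" by (simp add: gc_Xp[OF gX] gc_Xp[OF gY])
    finally show ?thesis by simp
  qed
  have s: "small (\<lambda>n. N (M ^ n - X * M ^ (Suc n)) + N (M ^ n - Y * M ^ (Suc n)))"
    by (rule small_add[OF N_ge N_ge gc_small[OF gX] gc_small[OF gY]])
  have "X - Y = 0"
  proof (rule zero_crit[OF s _ _ N_ge])
    fix n
    have "N (X - Y) \<le> N ((X * M ^ Suc n - M ^ n) - (Y * M ^ Suc n - M ^ n)) * N (X ^ Suc n)"
      unfolding eq[of n] by (rule N_mult)
    also have "\<dots> \<le> (N (M ^ n - X * M ^ (Suc n)) + N (M ^ n - Y * M ^ (Suc n))) * N X ^ Suc n"
    proof (rule mult_mono[OF _ N_pow add_nonneg_nonneg[OF N_ge N_ge] N_ge])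
      have "N ((X * M ^ Suc n - M ^ n) - (Y * M ^ Suc n - M ^ n)) \<le> N (X * M ^ Suc n - M ^ n) + N (Y * M ^ Suc n - M ^ n)"
        by (rule N_diff)
      also have "\<dots> = N (M ^ n - X * M ^ (Suc n)) + N (M ^ n - Y * M ^ (Suc n))"
        by (simp only: N_commute[of "X * M ^ Suc n"] N_commute[of "Y * M ^ Suc n"])
      finally show "N ((X * M ^ Suc n - M ^ n) - (Y * M ^ Suc n - M ^ n)) \<le> N (M ^ n - X * M ^ (Suc n)) + N (M ^ n - Y * M ^ (Suc n))" .
    qed
    also have "\<dots> = N X * (N (M ^ n - X * M ^ (Suc n)) + N (M ^ n - Y * M ^ (Suc n))) * N X ^ n"
      by simp
    finally show "N (X - Y) \<le> N X * (N (M ^ n - X * M ^ (Suc n)) + N (M ^ n - Y * M ^ (Suc n))) * N X ^ n" .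
  qed (auto intro: add_nonneg_nonneg N_ge)
  then show ?thesis by simp
qed


lemma idem_pow: "(r::'a) * r = r \<Longrightarrow> r ^ Suc k = r"
  by (induct k) (simp_all add: mult.assoc[symmetric])

lemma gd_aux:
  assumes gx: "gd a x" and gy: "gd a y"
  shows "(1 - a * y) * (a * x) = 0 \<and> (a * x) * (1 - a * y) = 0"
proof -
  define r where "r = 1 - a * y"
  define w where "w = a - a * a * y"
  have cx: "a * x = x * a" and cy: "a * y = y * a" and xax: "x * a * x = x" and yay: "y * a * y = y"
    using gx gy by (auto simp: gd_def)
  have sw: "small (\<lambda>n. N (w ^ n))" using gy by (simp add: gd_def w_def)
  have sw1: "small (\<lambda>n. N (w ^ Suc n))" using sw by (subst small_Suc_iff) (auto intro: N_ge)
  have rr: "r * r = r"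
  proof -
    have "(a * y) * (a * y) = a * y" by (metis yay mult.assoc)
    then show ?thesis by (simp add: r_def algebra_simps)
  qed
  have ar: "a * r = r * a"
  proof -
    have "a * (a * y) = (a * y) * a" by (metis cy mult.assoc)
    then show ?thesis unfolding r_def by (simp only: right_diff_distrib left_diff_distrib mult_1_left mult_1_right)
  qed
  have wr: "w = a * r" by (simp add: w_def r_def algebra_simps)
  have wpow: "w ^ Suc k = a ^ Suc k * r" for k
    using pow_commute_mult[OF ar, of "Suc k"] idem_pow[OF rr, of k] by (simp only: wr)
  have wpow2: "w ^ Suc k = r * a ^ Suc k" for k
    using wpow[of k] power_commuting_commutes[OF ar, of "Suc k"] by simp
  have pp: "(a * x) * (a * x) = a * x" by (metis xax mult.assoc)
  have ppow: "a * x = a ^ Suc n * x ^ Suc n" for n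
    using pow_commute_mult[OF cx, of "Suc n"] idem_pow[OF pp, of n] by simp
  have ppow2: "a * x = x ^ Suc n * a ^ Suc n" for n
  proof -
    have pp': "(x * a) * (x * a) = x * a" using pp cx by simp
    show ?thesis using pow_commute_mult[OF cx[symmetric], of "Suc n"] idem_pow[OF pp', of n] cx by simp
  qed
  have e1: "r * (a * x) = w ^ Suc n * x ^ Suc n" for n
    by (simp only: ppow[of n] wpow2 mult.assoc)
  have e2: "(a * x) * r = x ^ Suc n * w ^ Suc n" for n
    by (simp only: ppow2[of n] wpow mult.assoc)
  have "r * (a * x) = 0"
  proof (rule zero_crit[OF sw1 N_ge _ N_ge])
    fix n
    have "N (r * (a * x)) \<le> N (w ^ Suc n) * N (x ^ Suc n)" unfolding e1[of n] by (rule N_mult)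
    also have "\<dots> \<le> N (w ^ Suc n) * N x ^ Suc n" by (rule mult_left_mono[OF N_pow N_ge])
    also have "\<dots> = N x * N (w ^ Suc n) * N x ^ n" by simp
    finally show "N (r * (a * x)) \<le> N x * N (w ^ Suc n) * N x ^ n" .
  qed (rule N_ge)
  moreover have "(a * x) * r = 0"
  proof (rule zero_crit[OF sw1 N_ge _ N_ge])
    fix n
    have "N ((a * x) * r) \<le> N (x ^ Suc n) * N (w ^ Suc n)" unfolding e2[of n] by (rule N_mult)
    also have "\<dots> \<le> N x ^ Suc n * N (w ^ Suc n)" by (rule mult_right_mono[OF N_pow N_ge])
    also have "\<dots> = N x * N (w ^ Suc n) * N x ^ n" by simp
    finally show "N ((a * x) * r) \<le> N x * N (w ^ Suc n) * N x ^ n" .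
  qed (rule N_ge)
  ultimately show ?thesis by (simp add: r_def)
qed

lemma gd_unique:
  assumes gx: "gd a x" and gy: "gd a y"
  shows "x = y"
proof -
  have cx: "a * x = x * a" and cy: "a * y = y * a" and xax: "x * a * x = x" and yay: "y * a * y = y"
    using gx gy by (auto simp: gd_def)
  have h1: "(a * x) * (1 - a * y) = 0" using gd_aux[OF gx gy] by simp
  have h2: "(1 - a * x) * (a * y) = 0" using gd_aux[OF gy gx] by simp
  have "a * x = (a * x) * (a * y)" using h1 by (simp add: right_diff_distrib)
  also have "\<dots> = a * y" using h2 by (simp add: left_diff_distrib)
  finally have pq: "a * x = a * y" .
  have "x = x * a * x" by (rule xax[symmetric])
  also have "\<dots> = x * (a * y)" by (simp only: mult.assoc pq)
  also have "\<dots> = (x * a) * y" by (simp only: mult.assoc)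
  also have "\<dots> = (a * y) * y" by (simp only: cx[symmetric] pq)
  also have "\<dots> = (y * a) * y" by (simp only: cy)
  also have "\<dots> = y" by (rule yay)
  finally show ?thesis .
qed

end


lemma nsr_alg: "nsr (invol :: 'a::banach_star_algebra \<Rightarrow> 'a) norm"
  by unfold_locales (auto simp: invol_mult norm_triangle_ineq norm_mult_ineq)

fun m2plus :: "'a::banach_star_algebra mat2 \<Rightarrow> 'a mat2 \<Rightarrow> 'a mat2" where
  "m2plus (Mat2 a b c d) (Mat2 e f g h) = Mat2 (a + e) (b + f) (c + g) (d + h)"

fun m2uminus :: "'a::banach_star_algebra mat2 \<Rightarrow> 'a mat2" where
  "m2uminus (Mat2 a b c d) = Mat2 (- a) (- b) (- c) (- d)"

instantiation mat2 :: (banach_star_algebra) ring_1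
begin
definition zero_mat2 :: "'a mat2" where "zero_mat2 = Mat2 0 0 0 0"
definition one_mat2 :: "'a mat2" where "one_mat2 = m2one"
definition plus_mat2 :: "'a mat2 \<Rightarrow> 'a mat2 \<Rightarrow> 'a mat2" where "plus_mat2 = m2plus"
definition minus_mat2 :: "'a mat2 \<Rightarrow> 'a mat2 \<Rightarrow> 'a mat2" where "minus_mat2 = m2minus"
definition uminus_mat2 :: "'a mat2 \<Rightarrow> 'a mat2" where "uminus_mat2 = m2uminus"
definition times_mat2 :: "'a mat2 \<Rightarrow> 'a mat2 \<Rightarrow> 'a mat2" where "times_mat2 = m2mult"
instance
proof
  fix A B C :: "'a mat2"
  show "A * B * C = A * (B * C)"
    by (cases A; cases B; cases C) (simp add: times_mat2_def algebra_simps)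
  show "A + B + C = A + (B + C)"
    by (cases A; cases B; cases C) (simp add: plus_mat2_def algebra_simps)
  show "A + B = B + A"
    by (cases A; cases B) (simp add: plus_mat2_def algebra_simps)
  show "0 + A = A"
    by (cases A) (simp add: plus_mat2_def zero_mat2_def)
  show "- A + A = 0"
    by (cases A) (simp add: plus_mat2_def zero_mat2_def uminus_mat2_def)
  show "A - B = A + - B"
    by (cases A; cases B) (simp add: plus_mat2_def minus_mat2_def uminus_mat2_def)
  show "(A + B) * C = A * C + B * C"
    by (cases A; cases B; cases C) (simp add: plus_mat2_def times_mat2_def algebra_simps)
  show "A * (B + C) = A * B + A * C"
    by (cases A; cases B; cases C) (simp add: plus_mat2_def times_mat2_def algebra_simps)
  show "1 * A = A"
    by (cases A) (simp add: one_mat2_def times_mat2_def m2one_def)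
  show "A * 1 = A"
    by (cases A) (simp add: one_mat2_def times_mat2_def m2one_def)
  show "(0::'a mat2) \<noteq> 1"
    by (simp add: one_mat2_def zero_mat2_def m2one_def)
qed
end

lemma m2pow_eq: "m2pow M n = M ^ n"
  by (induct n) (simp_all add: one_mat2_def times_mat2_def)

lemma m2norm_mult: "m2norm (m2mult A B) \<le> m2norm A * m2norm B"
proof (cases A; cases B)
  fix a b c d e f g h :: 'a
  assume AB: "A = Mat2 a b c d" "B = Mat2 e f g h"
  have t: "norm (x * y + z * w) \<le> norm x * norm y + norm z * norm w" for x y z w :: 'a
    by (rule order_trans[OF norm_triangle_ineq add_mono[OF norm_mult_ineq norm_mult_ineq]])
  have nn: "0 \<le> norm x * norm y" for x y :: 'a by simp
  show ?thesis
    unfolding AB m2mult.simps m2norm.simps ring_distribs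
    using t[of a e b g] t[of a f b h] t[of c e d g] t[of c f d h]
      nn[of a f] nn[of a g] nn[of a h] nn[of b e] nn[of b f] nn[of b h]
      nn[of c f] nn[of c g] nn[of c h] nn[of d e] nn[of d f] nn[of d h]
      nn[of a e] nn[of b g] nn[of c e] nn[of d g]
    by linarith
qed

lemma nsr_mat: "nsr (m2invol :: 'a::banach_star_algebra mat2 \<Rightarrow> 'a mat2) m2norm"
proof
  fix x y :: "'a mat2"
  show "m2invol (x * y) = m2invol y * m2invol x"
    by (cases x; cases y) (simp add: times_mat2_def invol_add invol_mult)
  show "0 \<le> m2norm x" by (cases x) simp
  show "m2norm x = 0 \<Longrightarrow> x = 0"
    by (cases x) (simp add: zero_mat2_def add_nonneg_eq_0_iff)
  show "m2norm (x + y) \<le> m2norm x + m2norm y"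
    by (cases x; cases y) (simp add: plus_mat2_def, smt (verit) norm_triangle_ineq)
  show "m2norm (x * y) \<le> m2norm x * m2norm y"
    unfolding times_mat2_def by (rule m2norm_mult)
  show "m2norm (- x) = m2norm x" by (cases x) (simp add: uminus_mat2_def)
qed


interpretation A: nsr "invol :: 'a::banach_star_algebra \<Rightarrow> 'a" norm by (rule nsr_alg)
interpretation B: nsr "m2invol :: 'a::banach_star_algebra mat2 \<Rightarrow> 'a mat2" m2norm by (rule nsr_mat)

lemma gc_alg: "is_gcEP a x \<longleftrightarrow> A.gc a x"
  by (simp add: A.gc_def is_gcEP_def small_def power2_eq_square)

lemma gd_alg: "is_gDrazin a x \<longleftrightarrow> A.gd a x"
  by (simp add: A.gd_def is_gDrazin_def small_def quasinil_def)

lemma gc_mat: "is_gcEP2 M X \<longleftrightarrow> B.gc M X"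
  by (simp add: B.gc_def is_gcEP2_def small_def m2pow_eq times_mat2_def[symmetric] minus_mat2_def[symmetric])

lemma gcEP_eq: "is_gcEP a x \<Longrightarrow> gcEP a = x"
  unfolding gcEP_def by (rule the_equality) (auto simp: gc_alg intro: A.gc_unique)

lemma gDrazin_eq: "is_gDrazin a x \<Longrightarrow> gDrazin a = x"
  unfolding gDrazin_def by (rule the_equality) (auto simp: gd_alg intro: A.gd_unique)


lemma gd_exists:
  fixes a x :: "'a::banach_star_algebra"
  assumes g: "A.gc a x"
  shows "\<exists>z. is_gDrazin a z \<and> (1 - a * x) * (a * z) = 0"
proof -
  define p where "p = a * x"
  define u where "u = (1 - p) * a"
  define c where "c = a * (1 - p)"
  define t where "t n = x ^ Suc (Suc n) * c * u ^ n" for n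
  have sq: "a * (x * x) = x" by (rule A.gc_sq[OF g])
  have pX: "p * x = x" unfolding p_def by (rule A.gc_pX[OF g])
  have pp: "p * p = p" unfolding p_def by (rule A.gc_p_idem[OF g])
  have XMp: "x * a * p = p" unfolding p_def by (rule A.gc_XMp[OF g])
  have low: "(1 - p) * a * p = 0" unfolding p_def by (rule A.gc_low[OF g])
  have qp: "(1 - p) * p = 0" by (simp add: left_diff_distrib pp)
  have qq: "(1 - p) * (1 - p) = 1 - p" by (simp add: algebra_simps pp)
  have ap: "a * p = p * a * p" using low by (simp add: algebra_simps)
  have ua: "u * (1 - p) = u"
    using low by (simp add: u_def right_diff_distrib mult.assoc)
  have pu: "(1 - p) * u = u" by (simp add: u_def mult.assoc[symmetric] qq)
  have upow: "u ^ Suc n = (1 - p) * a ^ Suc n" for n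
  proof (induct n)
    case 0 then show ?case by (simp add: u_def)
  next
    case (Suc n)
    have "u ^ Suc (Suc n) = u * ((1 - p) * a ^ Suc n)" using Suc by simp
    also have "\<dots> = (u * (1 - p)) * a ^ Suc n" by (simp add: mult.assoc)
    also have "\<dots> = (1 - p) * a ^ Suc (Suc n)" by (subst ua) (simp only: u_def mult.assoc power_Suc)
    finally show ?case .
  qed
  have su1: "small (\<lambda>n. norm (u ^ Suc n))"
    using A.gc_tail_small[OF g] by (simp only: upow p_def)
  have su: "small (\<lambda>n. norm (u ^ n))"
    using su1 by (subst (asm) small_Suc_iff) auto
  have uq: "u ^ Suc m * (1 - p) = u ^ Suc m" for m
    by (simp only: power_Suc2 mult.assoc ua)
  have qu: "(1 - p) * u ^ Suc m = u ^ Suc m" for m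
    by (simp only: power_Suc mult.assoc[symmetric] pu)
  have quq: "(1 - p) * u ^ n * (1 - p) = (1 - p) * u ^ n" for n
  proof (cases n)
    case 0 then show ?thesis by (simp add: qq)
  next
    case (Suc m) then show ?thesis by (simp only: mult.assoc uq)
  qed
  have qup: "(1 - p) * u ^ n * p = 0" for n
  proof -
    have "(1 - p) * u ^ n * p = (1 - p) * u ^ n * ((1 - p) * p)"
      by (subst quq[of n, symmetric]) (simp add: mult.assoc)
    then show ?thesis by (simp add: qp)
  qed
  have cq: "c = a * (1 - p) * (1 - p)" by (simp add: c_def mult.assoc qq)
  have tb: "norm (t n) \<le> (norm x ^ 2 * norm c) * norm (u ^ n) * norm x ^ n" for n
  proof -
    have "norm (t n) \<le> norm (x ^ Suc (Suc n)) * norm c * norm (u ^ n)"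
      unfolding t_def by (rule order_trans[OF norm_mult_ineq mult_right_mono[OF norm_mult_ineq]]) simp
    also have "\<dots> \<le> norm x ^ Suc (Suc n) * norm c * norm (u ^ n)"
      by (intro mult_right_mono norm_power_ineq) auto
    also have "\<dots> = (norm x ^ 2 * norm c) * norm (u ^ n) * norm x ^ n"
      by (simp add: power2_eq_square algebra_simps)
    finally show ?thesis .
  qed
  have st: "small (\<lambda>n. norm (t n))"
    by (rule small_mono[OF _ tb]) (auto intro!: small_geom small_scale su)
  have summ: "summable t"
    by (rule root_test_convergence[of _ 0]) (use st in \<open>simp_all add: small_def\<close>)
  define S where "S = suminf t"
  define z where "z = x + S"
  have axpow: "a * x ^ Suc (Suc k) = x ^ Suc k" for k
    by (simp only: power_Suc mult.assoc[symmetric] sq) (simp add: mult.assoc sq)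
  have pxpow: "p * x ^ Suc k = x ^ Suc k" for k
    by (simp only: power_Suc mult.assoc[symmetric] pX)
  have cua: "c * u ^ n * a = c * u ^ Suc n" for n
  proof -
    have "c * u ^ n * a = a * ((1 - p) * u ^ n * (1 - p)) * a"
      by (simp only: quq) (simp add: c_def mult.assoc)
    also have "\<dots> = a * ((1 - p) * u ^ n * u)" by (simp add: u_def mult.assoc)
    also have "\<dots> = c * u ^ Suc n" by (simp only: c_def power_Suc2 mult.assoc)
    finally show ?thesis .
  qed
  have ta: "t n * a = a * t (Suc n)" for n
  proof -
    have "a * t (Suc n) = (a * x ^ Suc (Suc (Suc n))) * c * u ^ Suc n"
      by (simp add: t_def mult.assoc)
    also have "\<dots> = x ^ Suc (Suc n) * (c * u ^ Suc n)" by (simp only: axpow mult.assoc)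
    also have "\<dots> = x ^ Suc (Suc n) * (c * u ^ n * a)" by (simp only: cua)
    also have "\<dots> = t n * a" by (simp only: t_def mult.assoc)
    finally show ?thesis by simp
  qed
  have at0: "a * t 0 = x * a - p"
  proof -
    have "a * t 0 = (a * (x * x)) * c" by (simp add: t_def power2_eq_square mult.assoc)
    also have "\<dots> = x * a - x * a * p" by (simp add: sq c_def right_diff_distrib mult.assoc)
    finally show ?thesis by (simp add: XMp)
  qed
  have aS: "a * S = (\<Sum>n. a * t n)" unfolding S_def by (rule suminf_mult[OF summ, symmetric])
  have Sa: "S * a = a * S - a * t 0"
  proof -
    have "S * a = (\<Sum>n. t n * a)" unfolding S_def by (rule suminf_mult2[OF summ])
    also have "\<dots> = (\<Sum>n. a * t (Suc n))" by (simp only: ta)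
    also have "\<dots> = a * (\<Sum>n. t (Suc n))"
      by (rule suminf_mult) (simp add: summ summable_Suc_iff)
    also have "\<dots> = a * (S - t 0)" unfolding S_def by (simp add: suminf_split_head[OF summ])
    finally show ?thesis by (simp add: right_diff_distrib)
  qed
  have pS: "p * S = S"
  proof -
    have "p * S = (\<Sum>n. p * t n)" unfolding S_def by (rule suminf_mult[OF summ, symmetric])
    also have "\<dots> = S" unfolding S_def t_def
      by (simp only: mult.assoc[symmetric] pxpow)
    finally show ?thesis .
  qed
  have Sp: "S * p = 0"
  proof -
    have "S * p = (\<Sum>n. t n * p)" unfolding S_def by (rule suminf_mult2[OF summ])
    also have "\<dots> = (\<Sum>n. 0)"
    proof -
      have "t n * p = 0" for n
      proof -
        have "t n * p = x ^ Suc (Suc n) * a * ((1 - p) * u ^ n * p)"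
          by (simp add: t_def c_def mult.assoc)
        then show ?thesis by (simp add: qup)
      qed
      then show ?thesis by simp
    qed
    finally show ?thesis by simp
  qed
  have az: "a * z = p + a * S" by (simp add: z_def p_def distrib_left)
  have za: "z * a = p + a * S" by (simp add: z_def distrib_right Sa at0)
  have Sx: "S * x = 0"
  proof -
    have "S * x = S * p * x" by (simp add: mult.assoc pX)
    then show ?thesis by (simp add: Sp)
  qed
  have SS: "S * S = 0"
  proof -
    have "S * S = S * p * S" by (simp add: mult.assoc pS)
    then show ?thesis by (simp add: Sp)
  qed
  have zaz: "z * a * z = z"
  proof -
    have "z * a * z = (p + a * S) * (x + S)" by (simp only: za) (simp add: z_def)
    also have "\<dots> = p * x + p * S + a * (S * x) + a * (S * S)"
      by (simp add: algebra_simps)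
    also have "\<dots> = z" by (simp add: pX pS Sx SS z_def)
    finally show ?thesis .
  qed
  define w where "w = a - a * a * z"
  have w_eq: "w = a - a * p - a * (a * S)" by (simp add: w_def mult.assoc az algebra_simps)
  have wp: "w * p = 0"
    by (simp add: w_eq left_diff_distrib mult.assoc pp Sp)
  have wq: "w * (1 - p) = w" by (simp add: right_diff_distrib wp)
  have qaaS: "(1 - p) * (a * (a * S)) = 0"
  proof -
    have "(1 - p) * (a * (a * S)) = (1 - p) * a * (a * p) * S" by (simp add: mult.assoc pS)
    also have "\<dots> = (1 - p) * a * (p * a * p) * S" by (simp only: ap[symmetric])
    also have "\<dots> = ((1 - p) * a * p) * a * p * S" by (simp only: mult.assoc)
    finally show ?thesis by (simp add: low)
  qed
  have qw: "(1 - p) * w = u"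
  proof -
    have "(1 - p) * w = (1 - p) * a - (1 - p) * a * p - (1 - p) * (a * (a * S))"
      by (simp add: w_eq right_diff_distrib mult.assoc)
    then show ?thesis by (simp add: low qaaS u_def)
  qed
  have wpow: "w ^ Suc n = w * u ^ n" for n
  proof (induct n)
    case 0 then show ?case by simp
  next
    case (Suc n)
    have "w ^ Suc (Suc n) = (w * (1 - p)) * w * u ^ n" by (simp only: power_Suc[of w "Suc n"] Suc wq mult.assoc)
    also have "\<dots> = w * u ^ Suc n" by (simp add: mult.assoc qw)
    finally show ?case .
  qed
  have sw1: "small (\<lambda>n. norm (w ^ Suc n))"
  proof (rule small_mono[OF _ _ small_scale[OF norm_ge_zero su, of w]])
    fix n show "norm (w ^ Suc n) \<le> norm w * norm (u ^ n)"
      by (simp only: wpow norm_mult_ineq)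
  qed simp
  have sw: "small (\<lambda>n. norm (w ^ n))" using sw1 by (subst (asm) small_Suc_iff) auto
  have gdz: "is_gDrazin a z"
    unfolding is_gDrazin_def quasinil_def
    using zaz az za sw by (simp add: small_def w_def)
  have "(1 - p) * (a * z) = 0"
  proof -
    have "(1 - p) * (a * z) = (1 - p) * p + (1 - p) * a * p * S" by (simp add: az distrib_left pS mult.assoc)
    then show ?thesis by (simp add: qp low)
  qed
  with gdz show ?thesis unfolding p_def by blast
qed


lemma key_b:
  fixes a x b :: "'a::banach_star_algebra"
  assumes gx: "is_gcEP a x" and ab: "api a * b = 0"
  shows "a * x * b = b"
proof -
  obtain z where gz: "is_gDrazin a z" and h: "(1 - a * x) * (a * z) = 0"
    using gd_exists[of a x] gx by (auto simp: gc_alg)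
  have "api a = 1 - a * z" by (simp add: api_def gDrazin_eq[OF gz])
  with ab have bz: "b = a * z * b" by (simp add: left_diff_distrib)
  have "(1 - a * x) * b = ((1 - a * x) * (a * z)) * b"
    by (subst bz) (simp add: mult.assoc)
  then have "(1 - a * x) * b = 0" by (simp add: h)
  then show ?thesis by (simp add: left_diff_distrib)
qed

fun Bs :: "'a::banach_star_algebra \<Rightarrow> 'a \<Rightarrow> 'a \<Rightarrow> nat \<Rightarrow> 'a" where
  "Bs a b d 0 = 0"
| "Bs a b d (Suc n) = a * Bs a b d n + b * d ^ n"

lemma m2pow_tri: "m2pow (Mat2 a b 0 d) n = Mat2 (a ^ n) (Bs a b d n) 0 (d ^ n)"
  by (induct n) (simp_all add: m2one_def)

lemma invol_zero: "invol (0::'a::banach_star_algebra) = 0"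
  using invol_add[of "0::'a" 0] by simp

theorem corollary4p8:
  fixes a b d :: "'a::banach_star_algebra"
  assumes "\<exists>x. is_gcEP a x"
    and "\<exists>y. is_gcEP d y"
    and "api a * b = 0"
  shows "(\<exists>!X. is_gcEP2 (Mat2 a b 0 d) X) \<and>
         gcEP2 (Mat2 a b 0 d) = Mat2 (gcEP a) (- (gcEP a * b * gcEP d)) 0 (gcEP d)"
proof -
  obtain x where gx: "is_gcEP a x" using assms(1) by blast
  obtain y where gy: "is_gcEP d y" using assms(2) by blast
  have ex: "gcEP a = x" by (rule gcEP_eq[OF gx])
  have ey: "gcEP d = y" by (rule gcEP_eq[OF gy])
  have ga: "A.gc a x" using gx by (simp add: gc_alg)
  have gd: "A.gc d y" using gy by (simp add: gc_alg)
  have pb: "a * x * b = b" by (rule key_b[OF gx assms(3)])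
  have sqa: "a * (x * (x * w)) = x * w" for w
    using A.gc_sq[OF ga] by (simp add: mult.assoc[symmetric])
  have sqd: "d * (y * y) = y" by (rule A.gc_sq[OF gd])
  have pbw: "a * (x * (b * w)) = b * w" for w
    using pb by (simp add: mult.assoc[symmetric])
  define M where "M = Mat2 a b 0 d"
  define X where "X = Mat2 x (- (x * b * y)) 0 y"
  have low: "(1 - a * x) * a * (a * x) = 0" by (rule A.gc_low[OF ga])
  have ap: "a * (a * x) = (a * x) * a * (a * x)" using low by (simp add: algebra_simps)
  have XMp: "x * a * (a * x) = a * x" by (rule A.gc_XMp[OF ga])
  have pB: "(a * x) * Bs a b d n = Bs a b d n" for n
  proof (induct n)
    case 0 then show ?case by simp
  next
    case (Suc n)
    have "(a * x) * Bs a b d (Suc n) = (a * x) * a * Bs a b d n + (a * x * b) * d ^ n"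
      by (simp add: distrib_left mult.assoc)
    also have "\<dots> = (a * x) * a * ((a * x) * Bs a b d n) + (a * x * b) * d ^ n"
      by (simp only: Suc)
    also have "\<dots> = ((a * x) * a * (a * x)) * Bs a b d n + b * d ^ n"
      by (simp only: pbw mult.assoc)
    also have "\<dots> = (a * (a * x)) * Bs a b d n + b * d ^ n"
      by (simp only: ap[symmetric])
    also have "\<dots> = a * Bs a b d n + b * d ^ n"
      by (simp only: mult.assoc[of a "a * x"] Suc)
    finally show ?case by simp
  qed
  have xB: "x * Bs a b d (Suc n) = Bs a b d n + x * b * d ^ n" for n
  proof -
    have "x * Bs a b d (Suc n) = x * a * Bs a b d n + x * b * d ^ n"
      by (simp add: distrib_left mult.assoc)
    also have "\<dots> = x * a * ((a * x) * Bs a b d n) + x * b * d ^ n"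
      by (simp only: pB)
    also have "\<dots> = (x * a * (a * x)) * Bs a b d n + x * b * d ^ n" by (simp only: mult.assoc)
    also have "\<dots> = Bs a b d n + x * b * d ^ n" by (simp only: XMp pB)
    finally show ?thesis .
  qed
  have c1: "m2mult M (m2mult X X) = X"
    by (simp add: M_def X_def algebra_simps sqa sqd pbw A.gc_sq[OF ga])
  have c2: "m2invol (m2mult M X) = m2mult M X"
  proof -
    have "m2mult M X = Mat2 (a * x) 0 0 (d * y)"
      by (simp add: M_def X_def algebra_simps pbw)
    then show ?thesis
      using A.gc_inv[OF ga] A.gc_inv[OF gd] by (simp add: invol_zero)
  qed
  have eqn: "m2minus (m2pow M n) (m2mult X (m2pow M (Suc n)))
      = Mat2 (a ^ n - x * a ^ Suc n) (- (x * b * (d ^ n - y * d ^ Suc n))) 0 (d ^ n - y * d ^ Suc n)" for n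
    unfolding M_def X_def m2pow_tri m2mult.simps m2minus.simps xB
    by (simp add: algebra_simps)
  have nb: "m2norm (m2minus (m2pow M n) (m2mult X (m2pow M (Suc n))))
      \<le> (norm (a ^ n - x * a ^ Suc n) + norm (x * b) * norm (d ^ n - y * d ^ Suc n)) + norm (d ^ n - y * d ^ Suc n)" for n
  proof -
    have "norm (x * b * (d ^ n - y * d ^ Suc n)) \<le> norm (x * b) * norm (d ^ n - y * d ^ Suc n)"
      by (rule norm_mult_ineq)
    then show ?thesis unfolding eqn by simp
  qed
  have sm: "small (\<lambda>n. (norm (a ^ n - x * a ^ Suc n) + norm (x * b) * norm (d ^ n - y * d ^ Suc n)) + norm (d ^ n - y * d ^ Suc n))"
    using A.gc_small[OF ga] A.gc_small[OF gd]
    by (intro small_add small_scale) auto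
  have c3: "small (\<lambda>n. m2norm (m2minus (m2pow M n) (m2mult X (m2pow M (Suc n)))))"
    by (rule small_mono[OF _ nb sm]) (rule B.N_ge)
  have gX: "is_gcEP2 M X"
    unfolding is_gcEP2_def using c1 c2 c3 by (simp add: small_def)
  have uq: "X' = X" if "is_gcEP2 M X'" for X'
    using that gX by (auto simp: gc_mat intro: B.gc_unique)
  have "\<exists>!X. is_gcEP2 M X" using gX uq by blast
  moreover have "gcEP2 M = X" unfolding gcEP2_def using gX uq by (rule the_equality)
  ultimately show ?thesis by (simp add: M_def X_def ex ey)
qed

end
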